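(* Let $r\ge 1$ and let $M_s=(V_s=\{s_1,\dots,s_r\},w_s)$ and $M_t=(V_t=\{t_1,\dots,t_r\},w_t)$ be metric spaces. Define $M_{st}=(\{1,\dots,r\},l)$ with $l(i,j)\coloneqq w_s(s_i,s_j)+w_t(t_i,t_j)$. Let $T^*_s$ be a minimum-weight TSP tour in $M_s$ and $T^*_t$ a minimum-weight TSP tour in $M_t$. Then there exists a TSP tour $T$ in $M_{st}$ with $$l(T)\le 2\sqrt{r-1}\,\big(w_s(T^*_s)+w_t(T^*_t)\big).$$
   Context: A TSP tour in a finite metric space on a point set $P$ is a cyclic ordering $v_1v_2\dots v_k$ of all points of $P$ (each exactly once); its weight is the sum of the distances $d(v_1,v_2)+d(v_2,v_3)+\dots+d(v_{k-1},v_k)+d(v_k,v_1)$. *)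

theory Defs
  imports Complex_Main
begin

definition metric_on :: "'a set \<Rightarrow> ('a \<Rightarrow> 'a \<Rightarrow> real) \<Rightarrow> bool" where
  "metric_on V d \<longleftrightarrow>
     (\<forall>x\<in>V. \<forall>y\<in>V. 0 \<le> d x y \<and> (d x y = 0 \<longleftrightarrow> x = y) \<and> d x y = d y x) \<and>
     (\<forall>x\<in>V. \<forall>y\<in>V. \<forall>z\<in>V. d x z \<le> d x y + d y z)"

definition is_tour :: "'a set \<Rightarrow> 'a list \<Rightarrow> bool" where
  "is_tour P T \<longleftrightarrow> distinct T \<and> set T = P"

definition tour_weight :: "('a \<Rightarrow> 'a \<Rightarrow> real) \<Rightarrow> 'a list \<Rightarrow> real" where
  "tour_weight d T = (\<Sum>i<length T. d (T ! i) (T ! ((i + 1) mod length T)))"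

definition min_tour :: "'a set \<Rightarrow> ('a \<Rightarrow> 'a \<Rightarrow> real) \<Rightarrow> 'a list \<Rightarrow> bool" where
  "min_tour P d T \<longleftrightarrow> is_tour P T \<and> (\<forall>T'. is_tour P T' \<longrightarrow> tour_weight d T \<le> tour_weight d T')"

end

theory Submission imports Defs "HOL-Library.Product_Lexorder" begin

lemma tw_split:
  assumes "length T = Suc m"
  shows "tour_weight d T = (\<Sum>i<m. d (T!i) (T!(Suc i))) + d (T!m) (T!0)"
proof -
  have "tour_weight d T = (\<Sum>i<Suc m. d (T ! i) (T ! ((i + 1) mod Suc m)))"
    unfolding tour_weight_def assms ..
  also have "\<dots> = (\<Sum>i<m. d (T ! i) (T ! ((i + 1) mod Suc m))) + d (T!m) (T!0)"
    by simp
  also have "(\<Sum>i<m. d (T ! i) (T ! ((i + 1) mod Suc m))) = (\<Sum>i<m. d (T!i) (T!(Suc i)))"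
    by (rule sum.cong) auto
  finally show ?thesis .
qed

lemma strip_tour:
  fixes x y :: "nat \<Rightarrow> real" and r k :: nat and X Y :: real
  assumes r: "r \<ge> 1" and k: "k \<ge> 1"
    and bnd: "\<forall>i\<in>{1..r}. 0 \<le> x i \<and> x i \<le> X \<and> 0 \<le> y i \<and> y i \<le> Y"
  shows "\<exists>T. is_tour {1..r} T \<and>
    tour_weight (\<lambda>i j. \<bar>x i - x j\<bar> + \<bar>y i - y j\<bar>) T
      \<le> ((real r - 2) / k + 2) * X + (k + 1) * Y"
proof -
  define w where "w = X / k"
  define b where "b i = min (k - 1) (nat \<lfloor>x i * k / X\<rfloor>)" for i
  define z where "z i = (if even (b i) then y i else Y - y i)" for i
  define \<Phi> where "\<Phi> i = real (b i) * Y + z i" for i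
  define key where "key i = (b i, z i)" for i
  define T where "T = sort_key key [1..<r+1]"
  have X0: "X \<ge> 0" and Y0: "Y \<ge> 0" using bnd r by force+
  have kpos: "real k > 0" using k by simp
  have bk: "b i < k" for i using k unfolding b_def by auto
  have bx: "real (b i) * w \<le> x i \<and> x i \<le> (real (b i) + 1) * w" if i: "i \<in> {1..r}" for i
  proof (cases "X = 0")
    case True
    then show ?thesis using bnd i unfolding w_def b_def by auto
  next
    case False
    then have Xp: "X > 0" using X0 by simp
    define f where "f = \<lfloor>x i * k / X\<rfloor>"
    have f0: "f \<ge> 0" unfolding f_def using bnd i Xp by auto
    have f1: "real_of_int f \<le> x i * k / X" "x i * k / X < real_of_int f + 1"
      unfolding f_def by linarith+
    show ?thesis
    proof (cases "nat f \<le> k - 1")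
      case True
      then have "b i = nat f" unfolding b_def f_def by simp
      then have bf: "real (b i) = real_of_int f" using f0 by simp
      have "real_of_int f * X \<le> x i * k" using f1(1) Xp by (simp add: field_simps)
      moreover have "x i * k < (real_of_int f + 1) * X" using f1(2) Xp by (simp add: field_simps)
      ultimately show ?thesis unfolding bf w_def using kpos
        by (simp add: field_simps)
    next
      case False
      then have "b i = k - 1" unfolding b_def f_def by simp
      then have bf: "real (b i) = real k - 1" using k by simp
      have "real_of_int f \<ge> real k" using False f0 by linarith
      then have "x i * k / X \<ge> k" using f1 by linarith
      then have "x i * k \<ge> k * X" using Xp by (simp add: field_simps)
      then have "x i \<ge> X" using kpos by (simp add: mult.commute)
      then have "x i = X" using bnd i by (meson order_antisym)
      then show ?thesis unfolding bf w_def using kpos Xp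
        by (simp add: field_simps)
    qed
  qed
  have Tset: "set T = {1..r}" and Tdist: "distinct T" and Tlen: "length T = r"
    unfolding T_def by auto
  have Tsorted: "sorted (map key T)" unfolding T_def by simp
  obtain m where m: "r = Suc m" using r by (cases r) auto
  have Tin: "T ! i \<in> {1..r}" if "i < r" for i
    using that Tset Tlen nth_mem by (metis)
  have step: "\<bar>x (T!i) - x (T!Suc i)\<bar> + \<bar>y (T!i) - y (T!Suc i)\<bar>
      \<le> w + (real (b (T!Suc i)) * w - real (b (T!i)) * w) + (\<Phi> (T!Suc i) - \<Phi> (T!i))"
    if i: "i < m" for i
  proof -
    define u where "u = T!i"
    define v where "v = T!Suc i"
    have u: "u \<in> {1..r}" and v: "v \<in> {1..r}" using i m Tin unfolding u_def v_def by auto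
    have "key u \<le> key v" unfolding u_def v_def
      using Tsorted i m Tlen by (simp add: sorted_iff_nth_mono)
    then have kuv: "b u < b v \<or> (b u = b v \<and> z u \<le> z v)"
      unfolding key_def by (auto simp: less_eq_prod_def)
    have xb: "\<bar>x u - x v\<bar> \<le> w + (real (b v) * w - real (b u) * w)"
    proof -
      have "real (b u) \<le> real (b v)" using kuv by auto
      then have "real (b u) * w \<le> real (b v) * w" using X0 kpos
        unfolding w_def by (intro mult_right_mono) auto
      then show ?thesis using bx[OF u] bx[OF v] by (auto simp: algebra_simps abs_if)
    qed
    have yb: "\<bar>y u - y v\<bar> \<le> \<Phi> v - \<Phi> u"
    proof (cases "b u = b v")
      case True
      then show ?thesis using kuv unfolding \<Phi>_def z_def by (auto split: if_splits)
    next
      case False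
      then have lt: "b u < b v" using kuv by auto
      have yu: "0 \<le> y u" "y u \<le> Y" and yv: "0 \<le> y v" "y v \<le> Y" using bnd u v by auto
      show ?thesis
      proof (cases "even (b u) = even (b v)")
        case True
        then have "b v \<ge> b u + 2" using lt
          by (metis Suc_leI add_2_eq_Suc' dvd_add_triv_right_iff even_Suc le_neq_implies_less
              Suc_eq_plus1 not_less_eq_eq)
        then have "real (b v) \<ge> real (b u) + 2" by simp
        then have "real (b v) * Y \<ge> (real (b u) + 2) * Y" using Y0 by (intro mult_right_mono) auto
        then show ?thesis unfolding \<Phi>_def z_def using yu yv
          by (auto simp: algebra_simps split: if_splits)
      next
        case False
        have "real (b v) \<ge> real (b u) + 1" using lt by simp
        then have "real (b v) * Y \<ge> (real (b u) + 1) * Y" using Y0 by (intro mult_right_mono) auto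
        then show ?thesis unfolding \<Phi>_def z_def using yu yv False
          by (auto simp: algebra_simps split: if_splits)
      qed
    qed
    show ?thesis using xb yb unfolding u_def v_def by linarith
  qed
  define B where "B j = real (b (T!j)) * w" for j
  define P where "P j = \<Phi> (T!j)" for j
  have "(\<Sum>i<m. \<bar>x (T!i) - x (T!Suc i)\<bar> + \<bar>y (T!i) - y (T!Suc i)\<bar>)
      \<le> (\<Sum>i<m. w + (B (Suc i) - B i) + (P (Suc i) - P i))"
    unfolding B_def P_def by (rule sum_mono) (use step in auto)
  also have "\<dots> = m * w + (B m - B 0) + (P m - P 0)"
    by (simp add: sum.distrib sum_lessThan_telescope)
  finally have S: "(\<Sum>i<m. \<bar>x (T!i) - x (T!Suc i)\<bar> + \<bar>y (T!i) - y (T!Suc i)\<bar>)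
      \<le> m * w + (B m - B 0) + (P m - P 0)" .
  have w0: "w \<ge> 0" unfolding w_def using X0 kpos by simp
  have Bm: "B m \<le> (real k - 1) * w" unfolding B_def
    using bk[of "T!m"] w0 k by (intro mult_right_mono) (auto simp: of_nat_diff)
  have B0: "B 0 \<ge> 0" unfolding B_def using w0 by simp
  have T0: "T!0 \<in> {1..r}" and Tm: "T!m \<in> {1..r}" using Tin m by auto
  have zb: "0 \<le> z j \<and> z j \<le> Y" if "j \<in> {1..r}" for j
    using bnd that unfolding z_def by auto
  have Pm: "P m \<le> real k * Y"
  proof -
    have "real (b (T!m)) * Y \<le> (real k - 1) * Y"
      using bk[of "T!m"] Y0 k by (intro mult_right_mono) (auto simp: of_nat_diff)
    then show ?thesis unfolding P_def \<Phi>_def using zb[OF Tm] by (simp add: algebra_simps)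
  qed
  have P0: "P 0 \<ge> 0" unfolding P_def \<Phi>_def using zb[OF T0] Y0 by simp
  have wrap: "\<bar>x (T!m) - x (T!0)\<bar> + \<bar>y (T!m) - y (T!0)\<bar> \<le> X + Y"
  proof -
    have "0 \<le> x (T!m) \<and> x (T!m) \<le> X \<and> 0 \<le> y (T!m) \<and> y (T!m) \<le> Y"
         "0 \<le> x (T!0) \<and> x (T!0) \<le> X \<and> 0 \<le> y (T!0) \<and> y (T!0) \<le> Y"
      using bnd T0 Tm by blast+
    then show ?thesis by (auto simp: abs_if)
  qed
  have tw: "tour_weight (\<lambda>i j. \<bar>x i - x j\<bar> + \<bar>y i - y j\<bar>) T
     = (\<Sum>i<m. \<bar>x (T!i) - x (T!Suc i)\<bar> + \<bar>y (T!i) - y (T!Suc i)\<bar>)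
       + (\<bar>x (T!m) - x (T!0)\<bar> + \<bar>y (T!m) - y (T!0)\<bar>)"
    by (rule tw_split) (use Tlen m in simp)
  have "tour_weight (\<lambda>i j. \<bar>x i - x j\<bar> + \<bar>y i - y j\<bar>) T
      \<le> m * w + (real k - 1) * w + real k * Y + X + Y"
    using tw S Bm B0 Pm P0 wrap by linarith
  also have "\<dots> = ((real r - 2) / k + 2) * X + (k + 1) * Y"
    unfolding w_def m using kpos by (simp add: field_simps)
  finally have "tour_weight (\<lambda>i j. \<bar>x i - x j\<bar> + \<bar>y i - y j\<bar>) T
      \<le> ((real r - 2) / k + 2) * X + (k + 1) * Y" .
  moreover have "is_tour {1..r} T" unfolding is_tour_def using Tset Tdist by simp
  ultimately show ?thesis by blast
qed

lemma path_coords: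
  assumes met: "metric_on V d" and tour: "is_tour V L" and ne: "L \<noteq> []"
  shows "\<exists>c. (\<forall>u\<in>V. 0 \<le> c u \<and> c u \<le> tour_weight d L) \<and> (\<forall>u\<in>V. \<forall>v\<in>V. d u v \<le> \<bar>c u - c v\<bar>)"
proof -
  obtain m where m: "length L = Suc m" using ne by (cases L) auto
  have LV: "L ! j \<in> V" if "j \<le> m" for j
    using tour m that unfolding is_tour_def by (metis less_Suc_eq_le nth_mem)
  have nn: "\<And>a b. a \<in> V \<Longrightarrow> b \<in> V \<Longrightarrow> 0 \<le> d a b" using met unfolding metric_on_def by blast
  have dz: "\<And>a. a \<in> V \<Longrightarrow> d a a = 0" using met unfolding metric_on_def by blast
  have sym: "\<And>a b. a \<in> V \<Longrightarrow> b \<in> V \<Longrightarrow> d a b = d b a" using met unfolding metric_on_def by blast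
  have tri: "\<And>a b c. a \<in> V \<Longrightarrow> b \<in> V \<Longrightarrow> c \<in> V \<Longrightarrow> d a c \<le> d a b + d b c"
    using met unfolding metric_on_def by blast
  define Pf where "Pf a = (\<Sum>j<a. d (L!j) (L!Suc j))" for a
  have edge: "0 \<le> d (L!j) (L!Suc j)" if "j < m" for j using nn LV that by simp
  have mono: "Pf a \<le> Pf b" if "a \<le> b" "b \<le> m" for a b
    unfolding Pf_def using that edge by (intro sum_mono2) auto
  have path: "d (L!a) (L!b) \<le> Pf b - Pf a" if "a \<le> b" "b \<le> m" for a b
    using that
  proof (induction b)
    case 0
    then show ?case using dz LV by simp
  next
    case (Suc b)
    show ?case
    proof (cases "a = Suc b")
      case True
      then show ?thesis using dz LV Suc.prems by simp
    next
      case False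
      then have ab: "a \<le> b" using Suc.prems by simp
      have "d (L!a) (L!Suc b) \<le> d (L!a) (L!b) + d (L!b) (L!Suc b)"
        using tri LV Suc.prems ab by simp
      also have "\<dots> \<le> Pf b - Pf a + d (L!b) (L!Suc b)" using Suc.IH ab Suc.prems by simp
      also have "\<dots> = Pf (Suc b) - Pf a" unfolding Pf_def by simp
      finally show ?thesis .
    qed
  qed
  have Pm: "Pf m \<le> tour_weight d L"
    using tw_split[OF m, of d] nn LV unfolding Pf_def by fastforce
  define idx where "idx u = (SOME j. j \<le> m \<and> L!j = u)" for u
  have idx: "idx u \<le> m \<and> L!(idx u) = u" if "u \<in> V" for u
  proof -
    have "\<exists>j. j \<le> m \<and> L!j = u" using that tour m unfolding is_tour_def
      by (metis in_set_conv_nth less_Suc_eq_le)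
    then show ?thesis unfolding idx_def by (rule someI_ex)
  qed
  define c where "c u = Pf (idx u)" for u
  have P0: "Pf 0 = 0" unfolding Pf_def by simp
  have "\<forall>u\<in>V. 0 \<le> c u \<and> c u \<le> tour_weight d L"
    unfolding c_def using idx mono[of 0] mono[of _ m] P0 Pm by (metis dual_order.trans le0 order_refl)
  moreover have "\<forall>u\<in>V. \<forall>v\<in>V. d u v \<le> \<bar>c u - c v\<bar>"
  proof (intro ballI)
    fix u v assume u: "u \<in> V" and v: "v \<in> V"
    show "d u v \<le> \<bar>c u - c v\<bar>"
    proof (cases "idx u \<le> idx v")
      case True
      then show ?thesis using path[of "idx u" "idx v"] idx[OF u] idx[OF v] unfolding c_def by auto
    next
      case False
      then show ?thesis using path[of "idx v" "idx u"] idx[OF u] idx[OF v] sym[OF u v]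
        unfolding c_def by auto
    qed
  qed
  ultimately show ?thesis by blast
qed


lemma coef:
  fixes r :: nat
  assumes r: "r \<ge> 2"
  defines "k \<equiv> nat \<lceil>sqrt (real r - 1)\<rceil>"
  shows "k \<ge> 1 \<and> ((real r - 2) / k + 2 + (k + 1)) / 2 \<le> 2 * sqrt (real r - 1)"
proof -
  define s where "s = sqrt (real r - 1)"
  have s1: "s \<ge> 1" unfolding s_def using r by simp
  have ss: "s * s = real r - 1" unfolding s_def using r by simp
  have kc: "real k = of_int \<lceil>s\<rceil>" unfolding k_def s_def using s1 s_def by simp
  have ks: "real k \<ge> s" "real k < s + 1" unfolding kc by linarith+
  have k1: "k \<ge> 1" using ks s1 by linarith
  have kp: "real k > 0" using k1 by simp
  have "(real r - 2) / k \<le> s"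
  proof -
    have "real r - 2 \<le> s * s" using ss by simp
    also have "\<dots> \<le> s * real k" using ks s1 by (intro mult_left_mono) auto
    finally show ?thesis using kp by (simp add: field_simps)
  qed
  then have gen: "((real r - 2) / k + 2 + (k + 1)) / 2 \<le> s + 2" using ks by simp
  show ?thesis
  proof (cases "s \<ge> 2")
    case True
    then show ?thesis using gen k1 unfolding s_def by linarith
  next
    case False
    then have "s * s < 2 * 2" using s1 by (intro mult_strict_mono) auto
    then have "r < 5" using ss by linarith
    then have "r = 2 \<or> r = 3 \<or> r = 4" using r by auto
    then show ?thesis
    proof (elim disjE)
      assume r2: "r = 2"
      then have "k = 1" unfolding k_def by simp
      then show ?thesis using r2 by simp
    next
      assume r3: "r = 3"
      have "s > 1" unfolding s_def r3 by simp
      moreover have "s < 2" using False by simp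
      ultimately have "real k > 1" "real k < 3" using ks by linarith+
      then have k2: "k = 2" by linarith
      have "(11/8::real) \<le> sqrt 2" by (rule real_le_rsqrt) (simp add: power2_eq_square)
      then show ?thesis using r3 k2 by simp
    next
      assume r4: "r = 4"
      have "s > 1" unfolding s_def r4 by simp
      moreover have "s < 2" using False by simp
      ultimately have "real k > 1" "real k < 3" using ks by linarith+
      then have k2: "k = 2" by linarith
      have "(3/2::real) \<le> sqrt 3" by (rule real_le_rsqrt) (simp add: power2_eq_square)
      then show ?thesis using r4 k2 by simp
    qed
  qed
qed


lemma tw_mono:
  assumes "\<forall>i\<in>set T. \<forall>j\<in>set T. d i j \<le> e i j"
  shows "tour_weight d T \<le> tour_weight e T"
  unfolding tour_weight_def
proof (rule sum_mono)
  fix i assume "i \<in> {..<length T}"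
  then have il: "i < length T" by simp
  then have "0 < length T" by linarith
  then have "(i + 1) mod length T < length T" by (rule mod_less_divisor)
  then have "T ! i \<in> set T" "T ! ((i + 1) mod length T) \<in> set T" using il by (metis nth_mem)+
  then show "d (T ! i) (T ! ((i + 1) mod length T)) \<le> e (T ! i) (T ! ((i + 1) mod length T))"
    using assms by blast
qed

theorem lemma3:
  fixes r :: nat
    and s :: "nat \<Rightarrow> 'a" and ws :: "'a \<Rightarrow> 'a \<Rightarrow> real"
    and t :: "nat \<Rightarrow> 'b" and wt :: "'b \<Rightarrow> 'b \<Rightarrow> real"
    and Ts :: "'a list" and Tt :: "'b list"
  assumes "r \<ge> 1"
    and "inj_on s {1..r}" and "inj_on t {1..r}"
    and "metric_on (s ` {1..r}) ws" and "metric_on (t ` {1..r}) wt"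
    and "min_tour (s ` {1..r}) ws Ts" and "min_tour (t ` {1..r}) wt Tt"
  shows "\<exists>T. is_tour {1..r} T \<and>
           tour_weight (\<lambda>i j. ws (s i) (s j) + wt (t i) (t j)) T
             \<le> 2 * sqrt (real r - 1) * (tour_weight ws Ts + tour_weight wt Tt)"
proof (cases "r = 1")
  case True
  have "is_tour {1..r} [1]" unfolding is_tour_def True by simp
  moreover have "tour_weight (\<lambda>i j. ws (s i) (s j) + wt (t i) (t j)) [1] = 0"
    using assms(4,5) True unfolding tour_weight_def metric_on_def by simp
  ultimately show ?thesis using True by auto
next
  case False
  then have r2: "r \<ge> 2" using assms(1) by simp
  define A where "A = tour_weight ws Ts"
  define B where "B = tour_weight wt Tt"
  have tS: "is_tour (s ` {1..r}) Ts" and tT: "is_tour (t ` {1..r}) Tt"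
    using assms(6,7) unfolding min_tour_def by auto
  have neS: "Ts \<noteq> []" using tS r2 unfolding is_tour_def by auto
  have neT: "Tt \<noteq> []" using tT r2 unfolding is_tour_def by auto
  obtain cs where cs: "\<forall>u\<in>s ` {1..r}. 0 \<le> cs u \<and> cs u \<le> A"
    "\<forall>u\<in>s ` {1..r}. \<forall>v\<in>s ` {1..r}. ws u v \<le> \<bar>cs u - cs v\<bar>"
    using path_coords[OF assms(4) tS neS] unfolding A_def by blast
  obtain ct where ct: "\<forall>u\<in>t ` {1..r}. 0 \<le> ct u \<and> ct u \<le> B"
    "\<forall>u\<in>t ` {1..r}. \<forall>v\<in>t ` {1..r}. wt u v \<le> \<bar>ct u - ct v\<bar>"
    using path_coords[OF assms(5) tT neT] unfolding B_def by blast
  define x where "x i = cs (s i)" for i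
  define y where "y i = ct (t i)" for i
  have bnd: "\<forall>i\<in>{1..r}. 0 \<le> x i \<and> x i \<le> A \<and> 0 \<le> y i \<and> y i \<le> B"
    using cs(1) ct(1) unfolding x_def y_def by auto
  have bnd': "\<forall>i\<in>{1..r}. 0 \<le> y i \<and> y i \<le> B \<and> 0 \<le> x i \<and> x i \<le> A"
    using bnd by auto
  have A0: "A \<ge> 0" and B0: "B \<ge> 0" using bnd r2 by force+
  define k where "k = nat \<lceil>sqrt (real r - 1)\<rceil>"
  have co: "k \<ge> 1 \<and> ((real r - 2) / k + 2 + (k + 1)) / 2 \<le> 2 * sqrt (real r - 1)"
    unfolding k_def by (rule coef[OF r2])
  define a where "a = (real r - 2) / k + 2"
  define b where "b = real k + 1"
  have ab: "(a + b) / 2 \<le> 2 * sqrt (real r - 1)" using co unfolding a_def b_def by simp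
  obtain T1 where T1: "is_tour {1..r} T1"
    "tour_weight (\<lambda>i j. \<bar>x i - x j\<bar> + \<bar>y i - y j\<bar>) T1 \<le> ((real r - 2) / k + 2) * A + (k + 1) * B"
    using strip_tour[OF assms(1), of k x A y B] co bnd by blast
  have T1b: "tour_weight (\<lambda>i j. \<bar>x i - x j\<bar> + \<bar>y i - y j\<bar>) T1 \<le> a * A + b * B"
    using T1(2) unfolding a_def b_def by (simp add: algebra_simps)
  obtain T2 where T2: "is_tour {1..r} T2"
    "tour_weight (\<lambda>i j. \<bar>y i - y j\<bar> + \<bar>x i - x j\<bar>) T2 \<le> ((real r - 2) / k + 2) * B + (k + 1) * A"
    using strip_tour[OF assms(1), of k y B x A] co bnd' by blast
  have T2': "tour_weight (\<lambda>i j. \<bar>x i - x j\<bar> + \<bar>y i - y j\<bar>) T2 \<le> a * B + b * A"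
  proof -
    have "(\<lambda>i j. \<bar>y i - y j\<bar> + \<bar>x i - x j\<bar>) = (\<lambda>i j. \<bar>x i - x j\<bar> + \<bar>y i - y j\<bar>)"
      by (intro ext) simp
    then show ?thesis using T2(2) unfolding a_def b_def by (simp add: algebra_simps)
  qed
  have le: "tour_weight (\<lambda>i j. ws (s i) (s j) + wt (t i) (t j)) T
      \<le> tour_weight (\<lambda>i j. \<bar>x i - x j\<bar> + \<bar>y i - y j\<bar>) T" if "is_tour {1..r} T" for T
  proof (rule tw_mono, intro ballI)
    fix i j assume "i \<in> set T" "j \<in> set T"
    then have "i \<in> {1..r}" "j \<in> {1..r}" using that unfolding is_tour_def by auto
    then show "ws (s i) (s j) + wt (t i) (t j) \<le> \<bar>x i - x j\<bar> + \<bar>y i - y j\<bar>"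
      using cs(2) ct(2) unfolding x_def y_def by (meson add_mono image_eqI)
  qed
  have goal: "(a + b) / 2 * (A + B) \<le> 2 * sqrt (real r - 1) * (A + B)"
    using ab A0 B0 by (intro mult_right_mono) auto
  have sum: "(a * A + b * B) + (a * B + b * A) = (a + b) * (A + B)" by (simp add: algebra_simps)
  show ?thesis
  proof (cases "a * A + b * B \<le> (a + b) / 2 * (A + B)")
    case True
    then show ?thesis using le[OF T1(1)] T1(1) T1b goal unfolding A_def B_def by (meson order_trans)
  next
    case False
    then have "a * B + b * A \<le> (a + b) / 2 * (A + B)" using sum by linarith
    then show ?thesis using le[OF T2(1)] T2(1) T2' goal unfolding A_def B_def by (meson order_trans)
  qed
qed

end
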